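(* Let $T$ be a complete theory and let $\varphi(\overline{x})$ be a $T$-formula having only finitely many solutions (in a model of $T$). Then $\varphi(\overline{x})$ is binarizable.
   Context: An expansion of a complete theory $T$ is a complete theory $T'$ in a language containing that of $T$ with $T\subseteq T'$. A $T$-formula $\varphi(\overline{x})$ is $n$-aritizable if $T$ has an expansion $T'$ such that $\varphi(\overline{x})$ is $T'$-equivalent to a Boolean combination of $T'$-formulas with $n$ free variables. Binarizable means $2$-aritizable. *)

theory Defs
  imports Main
begin

text \<open>A signature is a pair (function symbols, relation symbols); each symbol
 comes with its arity: a pair (s, n) means the symbol s of arity n.
 Constants are function symbols of arity 0.\<close>

type_synonym ('f,'r) signature = "('f \<times> nat) set \<times> ('r \<times> nat) set"

datatype 'f trm = Var nat | App 'f "'f trm list"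

datatype ('f,'r) fm =
    Falsum
  | Eq "'f trm" "'f trm"
  | Rel 'r "'f trm list"
  | Neg "('f,'r) fm"
  | Conj "('f,'r) fm" "('f,'r) fm"
  | Ex nat "('f,'r) fm"

definition All :: "nat \<Rightarrow> ('f,'r) fm \<Rightarrow> ('f,'r) fm" where
  "All x \<phi> = Neg (Ex x (Neg \<phi>))"

definition Iff :: "('f,'r) fm \<Rightarrow> ('f,'r) fm \<Rightarrow> ('f,'r) fm" where
  "Iff \<phi> \<psi> = Conj (Neg (Conj \<phi> (Neg \<psi>))) (Neg (Conj \<psi> (Neg \<phi>)))"

fun fv_trm :: "'f trm \<Rightarrow> nat set" where
  "fv_trm (Var i) = {i}"
| "fv_trm (App f ts) = (\<Union>t\<in>set ts. fv_trm t)"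

fun FV :: "('f,'r) fm \<Rightarrow> nat set" where
  "FV Falsum = {}"
| "FV (Eq t u) = fv_trm t \<union> fv_trm u"
| "FV (Rel r ts) = (\<Union>t\<in>set ts. fv_trm t)"
| "FV (Neg \<phi>) = FV \<phi>"
| "FV (Conj \<phi> \<psi>) = FV \<phi> \<union> FV \<psi>"
| "FV (Ex x \<phi>) = FV \<phi> - {x}"

fun wf_trm :: "('f,'r) signature \<Rightarrow> 'f trm \<Rightarrow> bool" where
  "wf_trm L (Var i) = True"
| "wf_trm L (App f ts) = ((f, length ts) \<in> fst L \<and> (\<forall>t\<in>set ts. wf_trm L t))"

fun wf_fm :: "('f,'r) signature \<Rightarrow> ('f,'r) fm \<Rightarrow> bool" where
  "wf_fm L Falsum = True"
| "wf_fm L (Eq t u) = (wf_trm L t \<and> wf_trm L u)"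
| "wf_fm L (Rel r ts) = ((r, length ts) \<in> snd L \<and> (\<forall>t\<in>set ts. wf_trm L t))"
| "wf_fm L (Neg \<phi>) = wf_fm L \<phi>"
| "wf_fm L (Conj \<phi> \<psi>) = (wf_fm L \<phi> \<and> wf_fm L \<psi>)"
| "wf_fm L (Ex x \<phi>) = wf_fm L \<phi>"

text \<open>Structures: a domain together with interpretations of the symbols
 (the interpretation of a symbol (s,n) is the function on lists of length n).\<close>

datatype ('a,'f,'r) struct =
  Struct (dom: "'a set") (fun_int: "'f \<Rightarrow> 'a list \<Rightarrow> 'a") (rel_int: "'r \<Rightarrow> 'a list \<Rightarrow> bool")

definition is_structure :: "('f,'r) signature \<Rightarrow> ('a,'f,'r) struct \<Rightarrow> bool" where
  "is_structure L M \<longleftrightarrow> dom M \<noteq> {} \<and>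
     (\<forall>(f,n)\<in>fst L. \<forall>as. set as \<subseteq> dom M \<and> length as = n \<longrightarrow> fun_int M f as \<in> dom M)"

fun eval :: "('a,'f,'r) struct \<Rightarrow> (nat \<Rightarrow> 'a) \<Rightarrow> 'f trm \<Rightarrow> 'a" where
  "eval M s (Var i) = s i"
| "eval M s (App f ts) = fun_int M f (map (eval M s) ts)"

fun sat :: "('a,'f,'r) struct \<Rightarrow> (nat \<Rightarrow> 'a) \<Rightarrow> ('f,'r) fm \<Rightarrow> bool" where
  "sat M s Falsum = False"
| "sat M s (Eq t u) = (eval M s t = eval M s u)"
| "sat M s (Rel r ts) = rel_int M r (map (eval M s) ts)"
| "sat M s (Neg \<phi>) = (\<not> sat M s \<phi>)"
| "sat M s (Conj \<phi> \<psi>) = (sat M s \<phi> \<and> sat M s \<psi>)"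
| "sat M s (Ex x \<phi>) = (\<exists>d\<in>dom M. sat M (s(x := d)) \<phi>)"

definition Th :: "('f,'r) signature \<Rightarrow> ('a,'f,'r) struct \<Rightarrow> ('f,'r) fm set" where
  "Th L M = {\<sigma>. wf_fm L \<sigma> \<and> FV \<sigma> = {} \<and> (\<forall>s. range s \<subseteq> dom M \<longrightarrow> sat M s \<sigma>)}"

definition complete_theory :: "'b itself \<Rightarrow> ('f,'r) signature \<Rightarrow> ('f,'r) fm set \<Rightarrow> bool" where
  "complete_theory _ L T \<longleftrightarrow> (\<exists>N :: ('b,'f,'r) struct. is_structure L N \<and> T = Th L N)"

definition solutions :: "('a,'f,'r) struct \<Rightarrow> nat list \<Rightarrow> ('f,'r) fm \<Rightarrow> 'a list set" where
  "solutions M xs \<phi> = {as. length as = length xs \<and> set as \<subseteq> dom M \<and>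
      (\<exists>s. range s \<subseteq> dom M \<and> (\<forall>i<length xs. s (xs ! i) = as ! i) \<and> sat M s \<phi>)}"

definition univ_close :: "nat list \<Rightarrow> ('f,'r) fm \<Rightarrow> ('f,'r) fm" where
  "univ_close vs \<phi> = foldr All vs \<phi>"

definition equiv_in :: "('f,'r) fm set \<Rightarrow> ('f,'r) fm \<Rightarrow> ('f,'r) fm \<Rightarrow> bool" where
  "equiv_in T \<phi> \<psi> \<longleftrightarrow>
     univ_close (sorted_list_of_set (FV \<phi> \<union> FV \<psi>)) (Iff \<phi> \<psi>) \<in> T"

inductive_set bool_comb :: "('f,'r) fm set \<Rightarrow> ('f,'r) fm set" for S where
  base: "\<phi> \<in> S \<Longrightarrow> \<phi> \<in> bool_comb S"
| neg: "\<phi> \<in> bool_comb S \<Longrightarrow> Neg \<phi> \<in> bool_comb S"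
| conj: "\<phi> \<in> bool_comb S \<Longrightarrow> \<psi> \<in> bool_comb S \<Longrightarrow> Conj \<phi> \<psi> \<in> bool_comb S"

text \<open>Expansions use symbols of type 'f + nat / 'r + nat: old symbols are
 embedded via Inl, and Inr provides fresh symbols of every arity.\<close>

definition embed_fm :: "('f,'r) fm \<Rightarrow> ('f + nat, 'r + nat) fm" where
  "embed_fm = map_fm Inl Inl"

definition embed_sig :: "('f,'r) signature \<Rightarrow> ('f + nat, 'r + nat) signature" where
  "embed_sig L = ((\<lambda>(f,n). (Inl f, n)) ` fst L, (\<lambda>(r,n). (Inl r, n)) ` snd L)"

definition is_expansion ::
  "'b itself \<Rightarrow> ('f,'r) signature \<Rightarrow> ('f,'r) fm set
     \<Rightarrow> ('f + nat, 'r + nat) signature \<Rightarrow> ('f + nat, 'r + nat) fm set \<Rightarrow> bool" where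
  "is_expansion B L T L' T' \<longleftrightarrow>
     fst (embed_sig L) \<subseteq> fst L' \<and> snd (embed_sig L) \<subseteq> snd L' \<and>
     complete_theory B L' T' \<and> embed_fm ` T \<subseteq> T'"

definition aritizable ::
  "'b itself \<Rightarrow> nat \<Rightarrow> ('f,'r) signature \<Rightarrow> ('f,'r) fm set \<Rightarrow> nat list \<Rightarrow> ('f,'r) fm \<Rightarrow> bool" where
  "aritizable B n L T xs \<phi> \<longleftrightarrow>
     (\<exists>L' T' \<psi>. is_expansion B L T L' T' \<and>
        \<psi> \<in> bool_comb {\<chi>. wf_fm L' \<chi> \<and> FV \<chi> \<subseteq> set xs \<and> card (FV \<chi>) \<le> n} \<and>
        equiv_in T' (embed_fm \<phi>) \<psi>)"

end

theory Submission
  imports Defs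
begin

definition emb :: "'a \<Rightarrow> ('a + 'f + 'r) \<times> nat" where
  "emb a = (Inl a, 0)"

definition unemb :: "('a + 'f + 'r) \<times> nat \<Rightarrow> 'a" where
  "unemb p = (case fst p of Inl a \<Rightarrow> a | Inr _ \<Rightarrow> undefined)"

lemma unemb_emb[simp]: "unemb (emb a) = a"
  by (simp add: emb_def unemb_def)

lemma emb_inj[simp]: "(emb a = emb b) = (a = b)"
  by (simp add: emb_def)

definition NS :: "('a,'f,'r) struct \<Rightarrow> 'a list \<Rightarrow> (('a + 'f + 'r) \<times> nat, 'f + nat, 'r + nat) struct" where
  "NS M es = Struct (emb ` dom M)
     (\<lambda>g ds. case g of Inl f \<Rightarrow> emb (fun_int M f (map unemb ds)) | Inr _ \<Rightarrow> emb (SOME a. a \<in> dom M))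
     (\<lambda>q ds. case q of Inl r \<Rightarrow> rel_int M r (map unemb ds) | Inr k \<Rightarrow> ds = [emb (es ! k)])"

lemma NS_simps[simp]:
  "dom (NS M es) = emb ` dom M"
  "fun_int (NS M es) (Inl f) ds = emb (fun_int M f (map unemb ds))"
  "rel_int (NS M es) (Inl r) ds = rel_int M r (map unemb ds)"
  "rel_int (NS M es) (Inr k) ds = (ds = [emb (es ! k)])"
  by (simp_all add: NS_def)

lemma eval_NS: "eval (NS M es) (emb \<circ> s) (map_trm Inl t) = emb (eval M s t)"
proof (induction t)
  case (Var x)
  then show ?case by simp
next
  case (App f ts)
  have "map unemb (map (eval (NS M es) (emb \<circ> s)) (map (map_trm Inl) ts)) = map (eval M s) ts"
    using App by (simp add: map_eq_conv comp_def)
  then show ?case by (metis eval.simps(2) trm.map(2) NS_simps(2))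
qed

lemma upd_comp: "(emb \<circ> s)(x := emb a) = emb \<circ> (s(x := a))"
  by (rule ext) simp

lemma sat_NS: "sat (NS M es) (emb \<circ> s) (embed_fm \<phi>) = sat M s \<phi>"
proof (induction \<phi> arbitrary: s)
  case (Rel r ts)
  have "map unemb (map (eval (NS M es) (emb \<circ> s)) (map (map_trm Inl) ts)) = map (eval M s) ts"
    using eval_NS[of M es s, unfolded comp_def] by (simp add: map_eq_conv comp_def)
  then show ?case by (metis embed_fm_def fm.map(3) sat.simps(3) NS_simps(3))
next
  case (Ex x \<phi>)
  have "sat (NS M es) (emb \<circ> s) (embed_fm (fm.Ex x \<phi>)) = (\<exists>a\<in>dom M. sat (NS M es) ((emb \<circ> s)(x:=emb a)) (embed_fm \<phi>))"
    by (auto simp: embed_fm_def)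
  also have "\<dots> = (\<exists>a\<in>dom M. sat M (s(x:=a)) \<phi>)"
    unfolding upd_comp Ex.IH by (rule refl)
  finally show ?case by (simp only: comp_def sat.simps(6))
qed (auto simp: embed_fm_def eval_NS)

lemma fv_map_trm: "fv_trm (map_trm f t) = fv_trm t"
  by (induction t) auto

lemma FV_embed: "FV (embed_fm \<phi>) = FV \<phi>"
  by (induction \<phi>) (auto simp: embed_fm_def fv_map_trm)

lemma wf_map_trm: "wf_trm L t \<Longrightarrow> wf_trm (embed_sig L) (map_trm Inl t)"
  by (induction t) (auto simp: embed_sig_def)

lemma wf_map_trm': "wf_trm L t \<Longrightarrow> fst L' = fst (embed_sig L) \<Longrightarrow> wf_trm L' (map_trm Inl t)"
proof (induction t)
  case (App f ts)
  then show ?case by (auto simp: embed_sig_def)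
qed simp

lemma wf_embed: "wf_fm L \<phi> \<Longrightarrow> fst L' = fst (embed_sig L) \<Longrightarrow> snd (embed_sig L) \<subseteq> snd L'
   \<Longrightarrow> wf_fm L' (embed_fm \<phi>)"
  by (induction \<phi>) (auto simp: embed_fm_def embed_sig_def wf_map_trm')

lemma eval_coinc: "\<forall>x\<in>fv_trm u. s x = t x \<Longrightarrow> eval M s u = eval M t u"
proof (induction u)
  case (App f ts)
  then have "map (eval M s) ts = map (eval M t) ts" by (simp add: map_eq_conv)
  then show ?case by (metis eval.simps(2))
qed simp

lemma sat_coinc: "\<forall>x\<in>FV \<phi>. s x = t x \<Longrightarrow> sat M s \<phi> = sat M t \<phi>"
proof (induction \<phi> arbitrary: s t)
  case (Eq u v)
  then show ?case using eval_coinc[of u s t M] eval_coinc[of v s t M] by auto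
next
  case (Rel r ts)
  then have "map (eval M s) ts = map (eval M t) ts" using eval_coinc by (fastforce simp: map_eq_conv)
  then show ?case by (metis sat.simps(3))
next
  case (Conj a b)
  have "sat M s a = sat M t a" using Conj.prems by (intro Conj.IH) auto
  moreover have "sat M s b = sat M t b" using Conj.prems by (intro Conj.IH) auto
  ultimately show ?case by simp
next
  case (Ex x \<phi>)
  have "\<And>d. sat M (s(x:=d)) \<phi> = sat M (t(x:=d)) \<phi>"
    using Ex.prems by (intro Ex.IH) auto
  then show ?case by simp
qed auto

lemma sat_All: "sat N s (All x \<phi>) = (\<forall>d\<in>dom N. sat N (s(x:=d)) \<phi>)"
  by (simp add: All_def)

lemma sat_Iff: "sat N s (Iff a b) = (sat N s a = sat N s b)"
  by (auto simp add: Iff_def)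

lemma FV_univ_close: "FV (univ_close vs \<chi>) = FV \<chi> - set vs"
  by (induction vs) (auto simp: univ_close_def All_def)

lemma wf_univ_close: "wf_fm L (univ_close vs \<chi>) = wf_fm L \<chi>"
  by (induction vs) (auto simp: univ_close_def All_def)

lemma sat_univ_close:
  "range s \<subseteq> dom N \<Longrightarrow> (\<forall>s'. range s' \<subseteq> dom N \<longrightarrow> sat N s' \<chi>) \<Longrightarrow> sat N s (univ_close vs \<chi>)"
proof (induction vs arbitrary: s)
  case Nil
  then show ?case by (simp add: univ_close_def)
next
  case (Cons v vs)
  have "sat N (s(v:=d)) (univ_close vs \<chi>)" if "d \<in> dom N" for d
    using Cons that by (intro Cons.IH) auto
  then show ?case by (simp add: univ_close_def sat_All)
qed

definition Disj :: "('f,'r) fm \<Rightarrow> ('f,'r) fm \<Rightarrow> ('f,'r) fm" where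
  "Disj a b = Neg (Conj (Neg a) (Neg b))"

definition BigOr :: "('f,'r) fm list \<Rightarrow> ('f,'r) fm" where
  "BigOr l = foldr Disj l Falsum"

definition BigAnd :: "('f,'r) fm list \<Rightarrow> ('f,'r) fm" where
  "BigAnd l = foldr Conj l (Neg Falsum)"

lemma sat_BigOr: "sat N s (BigOr l) = (\<exists>a\<in>set l. sat N s a)"
  by (induction l) (auto simp: BigOr_def Disj_def)

lemma sat_BigAnd: "sat N s (BigAnd l) = (\<forall>a\<in>set l. sat N s a)"
  by (induction l) (auto simp: BigAnd_def)

lemma BigOr_bc: "set l \<subseteq> bool_comb S \<Longrightarrow> Falsum \<in> S \<Longrightarrow> BigOr l \<in> bool_comb S"
  by (induction l) (auto simp: BigOr_def Disj_def intro: bool_comb.intros)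

lemma BigAnd_bc: "set l \<subseteq> bool_comb S \<Longrightarrow> Falsum \<in> S \<Longrightarrow> BigAnd l \<in> bool_comb S"
  by (induction l) (auto simp: BigAnd_def intro: bool_comb.intros)

lemma bc_props: "\<chi> \<in> bool_comb {\<chi>. wf_fm L \<chi> \<and> FV \<chi> \<subseteq> A \<and> Q \<chi>} \<Longrightarrow> wf_fm L \<chi> \<and> FV \<chi> \<subseteq> A"
  by (induction rule: bool_comb.induct) auto

definition idx :: "'a list \<Rightarrow> 'a \<Rightarrow> nat" where
  "idx es e = (SOME k. k < length es \<and> es ! k = e)"

lemma idx_prop: "e \<in> set es \<Longrightarrow> es ! idx es e = e"
  unfolding idx_def by (rule someI2_ex) (auto simp: in_set_conv_nth)

definition atom :: "'a list \<Rightarrow> 'a \<Rightarrow> nat \<Rightarrow> ('f, 'r + nat) fm" where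
  "atom es e v = Rel (Inr (idx es e)) [Var v]"

definition tupfm :: "'a list \<Rightarrow> nat list \<Rightarrow> 'a list \<Rightarrow> ('f, 'r + nat) fm" where
  "tupfm es xs a = BigAnd (map (\<lambda>i. atom es (a ! i) (xs ! i)) [0..<length xs])"

theorem proposition2p3:
  fixes L :: "('f,'r) signature" and T :: "('f,'r) fm set"
    and M :: "('a,'f,'r) struct" and \<phi> :: "('f,'r) fm" and xs :: "nat list"
  assumes "is_structure L M"
    and "T = Th L M"
    and "distinct xs"
    and "wf_fm L \<phi>"
    and "FV \<phi> \<subseteq> set xs"
    and "finite (solutions M xs \<phi>)"
  shows "aritizable TYPE(('a + 'f + 'r) \<times> nat) 2 L T xs \<phi>"
proof -
  define S where "S = solutions M xs \<phi>"
  obtain ss where ss: "set ss = S" using finite_list assms(6) S_def by blast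
  define E where "E = (\<Union>a\<in>S. set a)"
  have "finite E" using assms(6) by (simp add: E_def S_def)
  then obtain es where es: "set es = E" using finite_list by blast
  define N where "N = (NS M es :: (('a + 'f + 'r) \<times> nat, 'f + nat, 'r + nat) struct)"
  define L' :: "('f + nat, 'r + nat) signature"
    where "L' = (fst (embed_sig L), snd (embed_sig L) \<union> range (\<lambda>k. (Inr k, 1)))"
  define \<psi> :: "('f + nat, 'r + nat) fm" where "\<psi> = BigOr (map (tupfm es xs) ss)"
  define BS where "BS = {\<chi>. wf_fm L' \<chi> \<and> FV \<chi> \<subseteq> set xs \<and> card (FV \<chi>) \<le> 2}"
  have closed: "fun_int N g as \<in> dom N"
    if "(g,n) \<in> fst L'" "set as \<subseteq> dom N" "length as = n" for g n as
  proof -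
    have "(g,n) \<in> (\<lambda>(f,n). (Inl f, n)) ` fst L" using that(1) by (simp add: L'_def embed_sig_def)
    then obtain p where p: "p \<in> fst L" "(g,n) = (\<lambda>(f,n). (Inl f, n)) p" by blast
    obtain f where f: "g = Inl f" "(f,n) \<in> fst L" using p by (cases p) auto
    have "set (map unemb as) \<subseteq> dom M" using that(2) by (auto simp: N_def)
    then have "fun_int M f (map unemb as) \<in> dom M"
      using assms(1) f(2) that(3) unfolding is_structure_def by auto
    then show ?thesis by (simp add: N_def f)
  qed
  have Nstruct: "is_structure L' N"
    unfolding is_structure_def
  proof
    show "dom N \<noteq> {}" using assms(1) by (simp add: N_def is_structure_def)
    show "\<forall>(f,n)\<in>fst L'. \<forall>as. set as \<subseteq> dom N \<and> length as = n \<longrightarrow> fun_int N f as \<in> dom N"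
      using closed by auto
  qed
  have dec: "\<exists>t. s' = emb \<circ> t \<and> range t \<subseteq> dom M" if "range s' \<subseteq> dom N" for s'
  proof (intro exI conjI)
    show "s' = emb \<circ> (unemb \<circ> s')"
    proof (rule ext)
      fix x
      have "s' x \<in> emb ` dom M" using that by (auto simp: N_def)
      then show "s' x = (emb \<circ> (unemb \<circ> s')) x" by auto
    qed
    show "range (unemb \<circ> s') \<subseteq> dom M"
    proof
      fix y assume "y \<in> range (unemb \<circ> s')"
      then obtain x where x: "y = unemb (s' x)" by auto
      have "s' x \<in> emb ` dom M" using that by (auto simp: N_def)
      then show "y \<in> dom M" using x by auto
    qed
  qed
  have Th_incl: "embed_fm ` T \<subseteq> Th L' N"
  proof
    fix \<chi> assume "\<chi> \<in> embed_fm ` T"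
    then obtain \<sigma> where \<sigma>: "\<sigma> \<in> Th L M" "\<chi> = embed_fm \<sigma>" using assms(2) by auto
    have "wf_fm L' \<chi>" using \<sigma> wf_embed[of L \<sigma> L'] by (auto simp: Th_def L'_def)
    moreover have "FV \<chi> = {}" using \<sigma> by (simp add: Th_def FV_embed)
    moreover have "sat N s' \<chi>" if rs: "range s' \<subseteq> dom N" for s'
    proof -
      obtain t where t: "s' = emb \<circ> t" "range t \<subseteq> dom M" using dec[OF rs] by blast
      have "sat M t \<sigma>" using \<sigma> t(2) by (simp add: Th_def)
      then show ?thesis using t(1) \<sigma>(2) sat_NS by (metis N_def)
    qed
    ultimately show "\<chi> \<in> Th L' N" by (simp add: Th_def)
  qed
  have exp: "is_expansion TYPE(('a + 'f + 'r) \<times> nat) L T L' (Th L' N)"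
    unfolding is_expansion_def complete_theory_def using Nstruct Th_incl by (auto simp: L'_def)
  have atomBS: "atom es e (xs!i) \<in> BS" if "i < length xs" for e i
    unfolding BS_def atom_def L'_def using that by auto
  have FBS: "Falsum \<in> BS" by (simp add: BS_def)
  have tupBC: "tupfm es xs a \<in> bool_comb BS" for a
    unfolding tupfm_def by (rule BigAnd_bc) (auto intro!: bool_comb.base atomBS FBS)
  have \<psi>BC: "\<psi> \<in> bool_comb BS"
    unfolding \<psi>_def by (rule BigOr_bc) (auto intro: tupBC FBS)
  then have \<psi>props: "wf_fm L' \<psi> \<and> FV \<psi> \<subseteq> set xs" unfolding BS_def by (rule bc_props)
  have key: "sat N s' (Iff (embed_fm \<phi>) \<psi>)" if rs: "range s' \<subseteq> dom N" for s'
  proof -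
    obtain t where t: "s' = emb \<circ> t" "range t \<subseteq> dom M" using dec[OF rs] by blast
    have A: "sat N s' (embed_fm \<phi>) = sat M t \<phi>" using sat_NS t(1) N_def by metis
    have B: "sat M t \<phi> = (map t xs \<in> S)"
    proof
      assume "sat M t \<phi>" then show "map t xs \<in> S" using t(2) unfolding S_def solutions_def by auto
    next
      assume "map t xs \<in> S"
      then obtain s where s: "range s \<subseteq> dom M" "\<forall>i<length xs. s (xs!i) = t (xs!i)" "sat M s \<phi>"
        by (auto simp: S_def solutions_def)
      have "\<forall>x\<in>FV \<phi>. s x = t x" using s(2) assms(5) by (metis in_set_conv_nth subsetD)
      then show "sat M t \<phi>" using sat_coinc s(3) by blast
    qed
    have tup: "sat N s' (tupfm es xs a) = (\<forall>i<length xs. s' (xs!i) = emb (a!i))" if "a \<in> S" for a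
    proof -
      have "a!i \<in> set es" if "i < length xs" for i
      proof -
        have "length a = length xs" using \<open>a \<in> S\<close> by (simp add: S_def solutions_def)
        then have "a!i \<in> set a" using that by simp
        then show ?thesis using \<open>a \<in> S\<close> es by (auto simp: E_def)
      qed
      then show ?thesis by (auto simp: tupfm_def sat_BigAnd atom_def N_def idx_prop)
    qed
    have C: "sat N s' \<psi> = (\<exists>a\<in>S. \<forall>i<length xs. s' (xs!i) = emb (a!i))"
      using ss tup by (auto simp: \<psi>_def sat_BigOr)
    have D: "(\<exists>a\<in>S. \<forall>i<length xs. s' (xs!i) = emb (a!i)) = (map t xs \<in> S)"
    proof
      assume "\<exists>a\<in>S. \<forall>i<length xs. s' (xs!i) = emb (a!i)"
      then obtain a where a: "a \<in> S" "\<forall>i<length xs. s' (xs!i) = emb (a!i)" by blast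
      have "length a = length xs" using a(1) by (simp add: S_def solutions_def)
      then have "map t xs = a" using a(2) by (simp add: list_eq_iff_nth_eq t(1))
      then show "map t xs \<in> S" using a(1) by simp
    next
      assume "map t xs \<in> S"
      then show "\<exists>a\<in>S. \<forall>i<length xs. s' (xs!i) = emb (a!i)"
        by (intro bexI[of _ "map t xs"]) (auto simp: t(1))
    qed
    show ?thesis using A B C D by (simp add: sat_Iff)
  qed
  define vs where "vs = sorted_list_of_set (FV (embed_fm \<phi>) \<union> FV \<psi>)"
  have fin: "finite (FV (embed_fm \<phi>) \<union> FV \<psi>)"
    using assms(5) \<psi>props by (auto simp: FV_embed intro: finite_subset)
  have "univ_close vs (Iff (embed_fm \<phi>) \<psi>) \<in> Th L' N"
  proof -
    have "wf_fm L' (univ_close vs (Iff (embed_fm \<phi>) \<psi>))"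
      using wf_embed[of L \<phi> L'] assms(4) \<psi>props
      by (auto simp: wf_univ_close Iff_def L'_def)
    moreover have "FV (univ_close vs (Iff (embed_fm \<phi>) \<psi>)) = {}"
      using fin by (auto simp: FV_univ_close Iff_def vs_def)
    moreover have "sat N s (univ_close vs (Iff (embed_fm \<phi>) \<psi>))" if "range s \<subseteq> dom N" for s
      using that key by (intro sat_univ_close) auto
    ultimately show ?thesis by (simp add: Th_def)
  qed
  then have "equiv_in (Th L' N) (embed_fm \<phi>) \<psi>" by (simp add: equiv_in_def vs_def)
  then show ?thesis unfolding aritizable_def using exp \<psi>BC unfolding BS_def by blast
qed

end
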